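(* In the typical setting below, with $\nu_{p-1}=\lfloor\frac{a+(p-1)\ell}{p}\rfloor$, one has $\nu_{p-1}\le e+\frac{(p-1)(r-1)c}{r}$, with equality if and only if $t\ge\frac{rpe}{p-1}-r$.
   Context: Typical setting: $p$ is an odd prime, $K$ a finite extension of $\mathbb{Q}_p$ with absolute ramification index $e$, and $L/K$ a degree $p$ extension whose normal closure $\widetilde L$ is totally ramified over $K$. Then $\mathrm{Gal}(\widetilde L/K)\cong C_p\rtimes C_r$ with $r=[\widetilde L:L]$ dividing $p-1$. The ramification jump $t$ is the integer with $G_t$ of order $p$ and $G_{t+1}=1$ (lower numbering ramification groups of $\widetilde L/K$); one has $1\le t\le rpe/(p-1)$. Assume $L/K$ is typical, i.e. $p\nmid t$ (equivalently $t<rpe/(p-1)$). Let $c$ be the remainder of $t$ mod $r$, $b=(t-pc)/r\in\mathbb{Z}$, $\ell=cp+b=\frac{pc(r-1)+t}{r}$, $a$ the remainder of $\ell$ mod $p$ (so $1\le a\le p-1$). *)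

theory Defs
  imports "HOL-Analysis.Analysis"
begin

end

theory Submission
  imports Defs
begin

theorem corollary6p6:
  fixes p r e t c b l a :: int and \<nu> :: int
  assumes "prime p" and "odd p"
    and "e \<ge> 1"
    and "r \<ge> 1" and "r dvd (p - 1)"
    and "1 \<le> t" and "real_of_int t \<le> real_of_int (r * p * e) / real_of_int (p - 1)"
    and "\<not> p dvd t"
    and "real_of_int t < real_of_int (r * p * e) / real_of_int (p - 1)"
    and "c = t mod r"
    and "r * b = t - p * c"
    and "l = c * p + b"
    and "a = l mod p"
    and "\<nu> = \<lfloor>real_of_int (a + (p - 1) * l) / real_of_int p\<rfloor>"
  shows "real_of_int \<nu> \<le> real_of_int e + real_of_int ((p - 1) * (r - 1) * c) / real_of_int r
    \<and> (real_of_int \<nu> = real_of_int e + real_of_int ((p - 1) * (r - 1) * c) / real_of_int r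
         \<longleftrightarrow> real_of_int t \<ge> real_of_int (r * p * e) / real_of_int (p - 1) - real_of_int r)"
proof -
  have p2: "p \<ge> 2" using assms(1) prime_ge_2_int by blast
  have p3: "p \<ge> 3" using p2 assms(2) by presburger
  have pm: "real_of_int (p - 1) > 0" using p3 by simp
  have rpos: "real_of_int r > 0" using assms(4) by simp
  have lt: "(p - 1) * t < r * p * e"
  proof -
    have "real_of_int t * real_of_int (p - 1) < real_of_int (r * p * e)"
      using assms(9) pm by (simp add: pos_less_divide_eq)
    then have "real_of_int ((p - 1) * t) < real_of_int (r * p * e)" by (simp add: algebra_simps)
    then show ?thesis by linarith
  qed
  define q where "q = l div p"
  have lq: "l = p * q + a" using assms(13) q_def by simp
  have rl: "r * l = p * c * (r - 1) + t" using assms(11,12) by (simp add: algebra_simps)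
  have a0: "a \<noteq> 0"
  proof
    assume "a = 0"
    then have "p dvd l" using lq by simp
    then have "p dvd r * l" by simp
    then have "p dvd p * c * (r - 1) + t" using rl by simp
    then have "p dvd t" by (simp add: dvd_add_right_iff)
    then show False using assms(8) by simp
  qed
  have ag: "0 \<le> a" "a < p" using assms(13) p2 by simp_all
  have a1: "1 \<le> a" "a \<le> p - 1" using a0 ag by linarith+
  have num: "a + (p - 1) * l = p * (l - q)" using lq by (simp add: algebra_simps)
  have nu: "\<nu> = l - q"
    using assms(14) num p2 by simp
  define D where "D = p * r * e - a * r - (p - 1) * t"
  have key: "p * r * \<nu> + D = p * r * e + p * (p - 1) * (r - 1) * c"
  proof -
    have "p * \<nu> = p * l - p * q" unfolding nu by (simp add: right_diff_distrib)
    moreover have "(p - 1) * l = p * l - l" by (simp add: left_diff_distrib)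
    ultimately have "p * \<nu> = (p - 1) * l + a" using lq by linarith
    then have "r * (p * \<nu>) = r * ((p - 1) * l + a)" by simp
    then have "p * r * \<nu> = (p - 1) * (r * l) + a * r" by (simp add: algebra_simps)
    then show ?thesis unfolding D_def rl by (simp add: algebra_simps)
  qed
  have dp: "p dvd D"
  proof -
    have "p dvd p * r * \<nu> + D" unfolding key by (simp add: algebra_simps)
    moreover have "p dvd p * r * \<nu>" by (simp add: mult.assoc)
    ultimately show ?thesis using dvd_add_right_iff by blast
  qed
  have dr: "r dvd D"
  proof -
    obtain k where k: "p - 1 = r * k" using assms(5) by blast
    have "D = r * (p * e - a - k * t)" unfolding D_def using k
      by (simp add: algebra_simps)
    then show ?thesis by simp
  qed
  have cop: "coprime p r"
  proof -
    have "coprime p (p - 1)"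
      by simp
    then show ?thesis using coprime_divisors[OF dvd_refl assms(5)] by blast
  qed
  have dpr: "p * r dvd D" using dp dr cop by (rule divides_mult)
  have Dgt: "D > - (p * r)"
  proof -
    have "a * r \<le> (p - 1) * r" using a1 assms(4) by (simp add: mult_right_mono)
    then show ?thesis using lt assms(4) unfolding D_def by (simp add: algebra_simps)
  qed
  have D0: "D \<ge> 0"
  proof (rule ccontr)
    assume "\<not> D \<ge> 0"
    obtain k where k: "D = p * r * k" using dpr by blast
    have prp: "p * r > 0" using p2 assms(4) by simp
    have "k < 0"
    proof (rule ccontr)
      assume "\<not> k < 0"
      then have "0 \<le> p * r * k" using prp by simp
      then show False using \<open>\<not> D \<ge> 0\<close> k by simp
    qed
    then have "k \<le> -1" by simp
    then have "p * r * k \<le> p * r * (-1)" using prp by (intro mult_left_mono) auto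
    then have "D \<le> - (p * r)" using k by simp
    then show False using Dgt by simp
  qed
  have cond: "(real_of_int t \<ge> real_of_int (r * p * e) / real_of_int (p - 1) - real_of_int r)
      \<longleftrightarrow> D \<le> r * (p - 1 - a)"
  proof -
    have "(real_of_int t \<ge> real_of_int (r * p * e) / real_of_int (p - 1) - real_of_int r)
       \<longleftrightarrow> real_of_int t + real_of_int r \<ge> real_of_int (r * p * e) / real_of_int (p - 1)" by linarith
    also have "\<dots> \<longleftrightarrow> (real_of_int t + real_of_int r) * real_of_int (p - 1) \<ge> real_of_int (r * p * e)"
      using pm by (simp add: divide_le_eq)
    also have "\<dots> \<longleftrightarrow> real_of_int ((t + r) * (p - 1)) \<ge> real_of_int (r * p * e)" by simp
    also have "\<dots> \<longleftrightarrow> (t + r) * (p - 1) \<ge> r * p * e" by linarith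
    also have "\<dots> \<longleftrightarrow> D \<le> r * (p - 1 - a)" unfolding D_def by (simp add: algebra_simps)
    finally show ?thesis .
  qed
  have condD: "D \<le> r * (p - 1 - a) \<longleftrightarrow> D = 0"
  proof
    assume h: "D \<le> r * (p - 1 - a)"
    obtain k where k: "D = p * r * k" using dpr by blast
    have "r * (p - 1 - a) < p * r" using a1 assms(4) by (simp add: algebra_simps) (smt (verit) mult_nonneg_nonneg)
    then have "D < p * r" using h by simp
    have prp: "p * r > 0" using p2 assms(4) by simp
    have "k < 1"
    proof (rule ccontr)
      assume "\<not> k < 1"
      then have "p * r * 1 \<le> p * r * k" using prp by (intro mult_left_mono) auto
      then show False using \<open>D < p * r\<close> k by simp
    qed
    moreover have "k \<ge> 0"
    proof (rule ccontr)
      assume "\<not> k \<ge> 0"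
      then have "p * r * k < 0" using prp by (simp add: mult_pos_neg)
      then show False using D0 k by simp
    qed
    ultimately show "D = 0" using k by simp
  next
    assume "D = 0" then show "D \<le> r * (p - 1 - a)" using a1 assms(4) by simp
  qed
  have R: "real_of_int e + real_of_int ((p - 1) * (r - 1) * c) / real_of_int r
       = real_of_int \<nu> + real_of_int D / (real_of_int p * real_of_int r)"
  proof -
    define P where "P = real_of_int p"
    define Rr where "Rr = real_of_int r"
    have P0: "P \<noteq> 0" "Rr \<noteq> 0" using rpos p2 unfolding P_def Rr_def by auto
    have D: "real_of_int D = P * Rr * real_of_int e + P * real_of_int ((p - 1) * (r - 1) * c) - P * Rr * real_of_int \<nu>"
    proof -
      have "D = p * r * e + p * ((p - 1) * (r - 1) * c) - p * r * \<nu>" using key by (simp add: algebra_simps)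
      then have "real_of_int D = real_of_int (p * r * e + p * ((p - 1) * (r - 1) * c) - p * r * \<nu>)" by simp
      then show ?thesis unfolding P_def Rr_def by simp
    qed
    have "real_of_int D / (P * Rr) = real_of_int e + real_of_int ((p - 1) * (r - 1) * c) / Rr - real_of_int \<nu>"
      unfolding D using P0 by (simp add: field_simps)
    then show ?thesis unfolding P_def Rr_def by simp
  qed
  have prr: "real_of_int p * real_of_int r > 0" using rpos p2 by simp
  show ?thesis unfolding R cond condD using D0 prr
    by (auto simp: divide_nonneg_pos)
qed

end
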